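(* Let $n>0$ be a fixed integer. Then for any integer $b>0$ there exist infinitely many integers $a>0$ such that the lattice $\mathbb{L}_{ab}$ contains no nonzero isotropic vector and $\mu(\mathbb{L}_{ab})<-n$, i.e. $\mathbb{L}_{ab}$ does not represent any of $0,-1,-2,\dots,-n$ by a nonzero vector.
   Context: For an integer $c>0$, $\mathbb{L}_c$ denotes the lattice $\mathbb{Z}^2$ with quadratic form $q(x,y)=x^2-cy^2$. A lattice represents $n$ if some nonzero vector $v$ has $q(v)=n$. For a lattice $\mathbb{L}$, $\mu(\mathbb{L})$ is the largest negative integer of the form $q(v)$, $v\in\mathbb{L}$. *)

theory Defs
  imports Main
begin

text \<open>The lattice L_c = Z^2 with quadratic form q_c(x,y) = x^2 - c*y^2.\<close>
definition qform :: "int \<Rightarrow> int \<times> int \<Rightarrow> int" where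
  "qform c v = (fst v)^2 - c * (snd v)^2"

definition represents :: "int \<Rightarrow> int \<Rightarrow> bool" where
  "represents c m \<longleftrightarrow> (\<exists>v. v \<noteq> (0,0) \<and> qform c v = m)"

definition has_isotropic :: "int \<Rightarrow> bool" where
  "has_isotropic c \<longleftrightarrow> represents c 0"

definition mu :: "int \<Rightarrow> int" where
  "mu c = (GREATEST m. m < 0 \<and> (\<exists>v. qform c v = m))"

end

theory Submission
  imports Defs
begin

lemma norm_step:
  fixes N x y :: int
  shows "(N*x - (N^2-1)*y)^2 - (N^2-1)*(N*y - x)^2 = x^2 - (N^2-1)*y^2"
  by (simp add: power2_eq_square algebra_simps)

lemma descent:
  fixes N k :: int
  assumes N: "N \<ge> 2" and k: "0 \<le> k" "k < 2*N - 2"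
  shows "\<forall>x y::int. y \<ge> 0 \<and> nat y = m \<and> x^2 - (N^2-1)*y^2 = -k \<longrightarrow> y = 0"
proof (induction m rule: less_induct)
  case (less m)
  show ?case
  proof (intro allI impI)
    fix x y :: int
    assume h: "y \<ge> 0 \<and> nat y = m \<and> x^2 - (N^2-1)*y^2 = -k"
    show "y = 0"
    proof (rule ccontr)
      assume y0: "y \<noteq> 0"
      with h have yp: "y \<ge> 1" by auto
      define X where "X = \<bar>x\<bar>"
      have X0: "X \<ge> 0" and Xe: "X^2 = x^2" unfolding X_def by auto
      have eq: "X^2 - (N^2-1)*y^2 = -k" using h Xe by simp
      have "y^2 > 0" using yp by simp
      have "X^2 < (N*y)^2"
      proof -
        have "X^2 = (N^2-1)*y^2 - k" using eq by simp
        also have "\<dots> < N^2*y^2"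
        proof -
          have "N^2*y^2 = (N^2-1)*y^2 + y^2" by (simp add: algebra_simps)
          thus ?thesis using k \<open>y^2 > 0\<close> by linarith
        qed
        finally show ?thesis by (simp add: power_mult_distrib)
      qed
      hence lt: "X < N*y" using X0 yp N
        by (intro power_less_imp_less_base[of X 2]) auto
      have "((N-1)*y)^2 < X^2"
      proof -
        have "((N-1)*y)^2 = (N^2-1)*y^2 - (2*N-2)*y^2"
          by (simp add: power2_eq_square algebra_simps)
        also have "(2*N-2)*y^2 \<ge> (2*N-2)"
          using mult_left_mono[of 1 "y^2" "2*N-2"] yp N \<open>y^2 > 0\<close> by simp
        hence "(N^2-1)*y^2 - (2*N-2)*y^2 < (N^2-1)*y^2 - k" using k by linarith
        also have "\<dots> = X^2" using eq by simp
        finally show ?thesis .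
      qed
      hence gt: "(N-1)*y < X" using X0
        by (rule power_less_imp_less_base)
      define y' where "y' = N*y - X"
      define x' where "x' = N*X - (N^2-1)*y"
      have "(N-1)*y = N*y - y" by (simp add: algebra_simps)
      hence y'p: "y' \<ge> 0" "y' < y" unfolding y'_def using lt gt by linarith+
      have eq': "x'^2 - (N^2-1)*y'^2 = -k" unfolding x'_def y'_def by (rule trans[OF norm_step eq])
      have "nat y' < m" using y'p h by auto
      with less y'p eq' have "y' = 0" by blast
      hence "X = N*y" unfolding y'_def by simp
      with lt show False by simp
    qed
  qed
qed

lemma nosol:
  fixes N k x y :: int
  assumes "N \<ge> 2" "0 \<le> k" "k < 2*N - 2" "x^2 - (N^2-1)*y^2 = -k"
  shows "x = 0 \<and> y = 0 \<and> k = 0"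
proof -
  have e: "x^2 - (N^2-1)*\<bar>y\<bar>^2 = -k" using assms(4) by simp
  have "\<bar>y\<bar> = 0"
  proof -
    have "0 \<le> \<bar>y\<bar> \<and> nat \<bar>y\<bar> = nat \<bar>y\<bar> \<and> x^2 - (N^2-1)*\<bar>y\<bar>^2 = -k" using e by simp
    with descent[OF assms(1-3), of "nat \<bar>y\<bar>"] show ?thesis by blast
  qed
  hence "y = 0" by simp
  with assms(4) have "x^2 = -k" by simp
  moreover have "x^2 \<ge> 0" by simp
  ultimately have "k = 0" "x^2 = 0" using assms(2) by auto
  with \<open>y = 0\<close> show ?thesis by simp
qed

lemma good:
  fixes N n :: int
  assumes N: "N \<ge> 2" and nn: "n < 2*N - 2" "n \<ge> 0"
  shows "\<not> has_isotropic (N^2-1) \<and> mu (N^2-1) < - n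
           \<and> (\<forall>k\<in>{0..n}. \<not> represents (N^2-1) (- k))"
proof -
  have nr: "\<not> represents (N^2-1) (- k)" if "0 \<le> k" "k < 2*N-2" for k
  proof
    assume "represents (N^2-1) (- k)"
    then obtain v where v: "v \<noteq> (0,0)" "qform (N^2-1) v = -k" unfolding represents_def by blast
    obtain x y where "v = (x,y)" by (cases v)
    with v nosol[OF N that, of x y] show False by (auto simp: qform_def)
  qed
  have A: "\<forall>k\<in>{0..n}. \<not> represents (N^2-1) (- k)" using nr nn by auto
  have B: "\<not> has_isotropic (N^2-1)" unfolding has_isotropic_def using nr[of 0] N by simp
  define P where "P = (\<lambda>m::int. m < 0 \<and> (\<exists>v. qform (N^2-1) v = m))"
  define T where "T = {m. P m \<and> - (N^2-1) \<le> m}"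
  have Tf: "finite T" unfolding T_def P_def by (rule finite_subset[of _ "{- (N^2-1)..0}"]) auto
  have "N*N \<ge> 2*2" using N by (intro mult_mono) auto
  hence N2: "N^2 \<ge> 4" by (simp add: power2_eq_square)
  have "P (- (N^2-1))" unfolding P_def qform_def using N2
    by (intro conjI exI[of _ "(0,1)"]) auto
  hence Tne: "T \<noteq> {}" unfolding T_def by auto
  have MT: "Max T \<in> T" using Tf Tne by simp
  have "(GREATEST m. P m) = Max T"
  proof (rule Greatest_equality)
    show "P (Max T)" using MT unfolding T_def by simp
    fix y assume "P y"
    show "y \<le> Max T"
    proof (cases "- (N^2-1) \<le> y")
      case True then show ?thesis using \<open>P y\<close> Tf unfolding T_def by auto
    next
      case False then show ?thesis using MT unfolding T_def by auto
    qed
  qed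
  hence mu: "mu (N^2-1) = Max T" unfolding mu_def P_def by simp
  have "Max T < - n"
  proof (rule ccontr)
    assume "\<not> Max T < - n"
    moreover obtain v where "Max T < 0" "qform (N^2-1) v = Max T" using MT unfolding T_def P_def by auto
    moreover have "v \<noteq> (0,0)" using calculation by (auto simp: qform_def)
    ultimately have "represents (N^2-1) (Max T)" unfolding represents_def by blast
    hence "represents (N^2-1) (- (- Max T))" by simp
    moreover have "0 \<le> - Max T" "- Max T < 2*N-2" using \<open>Max T < 0\<close> \<open>\<not> Max T < - n\<close> nn by auto
    ultimately show False using nr by blast
  qed
  with A B mu show ?thesis by simp
qed

theorem proposition2p3:
  fixes n b :: int
  assumes "n > 0" and "b > 0"
  shows "infinite {a::int. a > 0 \<and> \<not> has_isotropic (a * b) \<and> mu (a * b) < - n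
           \<and> (\<forall>k\<in>{0..n}. \<not> represents (a * b) (- k))}"
proof -
  define f where "f = (\<lambda>t::int. t*(b*t+2))"
  have sub: "f ` {n..} \<subseteq> {a::int. a > 0 \<and> \<not> has_isotropic (a * b) \<and> mu (a * b) < - n
           \<and> (\<forall>k\<in>{0..n}. \<not> represents (a * b) (- k))}"
  proof
    fix a assume "a \<in> f ` {n..}"
    then obtain t where t: "t \<ge> n" "a = f t" by auto
    have tp: "t \<ge> 1" using t assms by simp
    have "1*t \<le> b*t" using tp assms by (intro mult_right_mono) auto
    hence bt2: "b*t \<ge> t" by simp
    have bt: "b*t \<ge> 1" using tp bt2 by linarith
    have ab: "a*b = (b*t+1)^2 - 1" using t unfolding f_def by (simp add: power2_eq_square algebra_simps)
    have "a > 0" using t tp bt unfolding f_def by simp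
    moreover have "\<not> has_isotropic ((b*t+1)^2-1) \<and> mu ((b*t+1)^2-1) < - n
           \<and> (\<forall>k\<in>{0..n}. \<not> represents ((b*t+1)^2-1) (- k))"
      using good[of "b*t+1" n] bt bt2 t assms by simp
    ultimately show "a \<in> {a::int. a > 0 \<and> \<not> has_isotropic (a * b) \<and> mu (a * b) < - n
           \<and> (\<forall>k\<in>{0..n}. \<not> represents (a * b) (- k))}" using ab by simp
  qed
  have "strict_mono_on {n..} f"
  proof (rule strict_mono_onI)
    fix r s assume "r \<in> {n..}" "s \<in> {n..}" "r < s"
    hence "r \<ge> 1" "s \<ge> 1" using assms by auto
    have "b*r \<le> b*s" using \<open>r < s\<close> assms by simp
    have "b*r > 0" using \<open>r \<ge> 1\<close> assms by simp
    hence "r*(b*r+2) < s*(b*r+2)" using \<open>r<s\<close>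
      by (intro mult_strict_right_mono) auto
    also have "\<dots> \<le> s*(b*s+2)" using \<open>b*r \<le> b*s\<close> \<open>s \<ge> 1\<close> by simp
    finally show "f r < f s" unfolding f_def .
  qed
  hence "inj_on f {n..}" by (rule strict_mono_on_imp_inj_on)
  hence "infinite (f ` {n..})" using infinite_Ici[of n] finite_imageD by blast
  thus ?thesis using sub finite_subset by blast
qed

end
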